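(* Let $k$ be a field of characteristic $p>0$, let $d_1,\ldots,d_{n-1}$ be positive integers and suppose $d_n=\sum_{i=1}^{n-1}(d_i-1)$. Let \[ A = k[x_1,\ldots,x_n]/(x_1^{d_1}, \ldots, x_n^{d_n}) \quad\text{and}\quad B = k[x_1,\ldots,x_n]/(x_1^{d_1}, \ldots, x_{n-1}^{d_{n-1}}, x_n^{d_n-1}). \] If the multinomial coefficient $\binom{d_n}{d_1-1, \ldots, d_{n-1}-1}=\frac{d_n!}{(d_1-1)!\cdots(d_{n-1}-1)!}$ is not divisible by $p$, then both $A$ and $B$ have the weak Lefschetz property. If $\binom{d_n}{d_1-1, \ldots, d_{n-1}-1}$ is divisible by $p$, then $A$ fails to have the weak Lefschetz property.
   Context: Algebras are graded by degree, $A=\bigoplus_{i\ge0}A_i$. A graded artinian algebra $A$ has the weak Lefschetz property if there is a linear form $\ell\in A_1$ such that for every $i$ the map $A_i\to A_{i+1}$, $a\mapsto \ell a$, is injective or surjective. *)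

theory Defs
  imports Main
begin

text \<open>Monomial complete intersection k[x_0,...,x_(n-1)]/(x_0^(e 0),...,x_(n-1)^(e (n-1))).
  Its degree-i component A_i has k-basis the monomials x^a with a_j < e_j and |a| = i.
  An element of A_i is encoded by its coefficient function on exponent vectors, vanishing
  outside that basis set.\<close>

definition mono_basis :: "nat \<Rightarrow> (nat \<Rightarrow> nat) \<Rightarrow> nat \<Rightarrow> (nat \<Rightarrow> nat) set" where
  "mono_basis n e i = {a. (\<forall>j\<ge>n. a j = 0) \<and> (\<forall>j<n. a j < e j) \<and> (\<Sum>j<n. a j) = i}"

definition graded_piece :: "nat \<Rightarrow> (nat \<Rightarrow> nat) \<Rightarrow> nat \<Rightarrow> ((nat \<Rightarrow> nat) \<Rightarrow> 'a::field) set" where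
  "graded_piece n e i = {f. \<forall>a. a \<notin> mono_basis n e i \<longrightarrow> f a = 0}"

text \<open>Multiplication by the linear form l = sum_j c_j x_j, followed by reading off the
  coefficients at the basis monomials of the next degree (monomials with some exponent
  a_j >= e_j vanish in the quotient).\<close>

definition lin_mult :: "nat \<Rightarrow> (nat \<Rightarrow> 'a::field) \<Rightarrow> ((nat \<Rightarrow> nat) \<Rightarrow> 'a) \<Rightarrow> (nat \<Rightarrow> nat) \<Rightarrow> 'a" where
  "lin_mult n c f b = (\<Sum>j<n. if 0 < b j then c j * f (b(j := b j - 1)) else 0)"

definition mult_injective :: "nat \<Rightarrow> (nat \<Rightarrow> nat) \<Rightarrow> (nat \<Rightarrow> 'a::field) \<Rightarrow> nat \<Rightarrow> bool" where
  "mult_injective n e c i \<longleftrightarrow>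
     (\<forall>f \<in> graded_piece n e i.
        (\<forall>b \<in> mono_basis n e (Suc i). lin_mult n c f b = 0) \<longrightarrow> (\<forall>a. f a = 0))"

definition mult_surjective :: "nat \<Rightarrow> (nat \<Rightarrow> nat) \<Rightarrow> (nat \<Rightarrow> 'a::field) \<Rightarrow> nat \<Rightarrow> bool" where
  "mult_surjective n e c i \<longleftrightarrow>
     (\<forall>g \<in> graded_piece n e (Suc i). \<exists>f \<in> graded_piece n e i.
        \<forall>b \<in> mono_basis n e (Suc i). lin_mult n c f b = g b)"

definition has_WLP :: "'a::field itself \<Rightarrow> nat \<Rightarrow> (nat \<Rightarrow> nat) \<Rightarrow> bool" where
  "has_WLP _ n e \<longleftrightarrow>
     (\<exists>c :: nat \<Rightarrow> 'a. \<forall>i. mult_injective n e c i \<or> mult_surjective n e c i)"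

end

theory Submission
  imports Defs
begin

lemma sum_upd_nat:
  fixes f :: "nat \<Rightarrow> nat"
  assumes "finite A" "j \<in> A"
  shows "sum (f(j := x)) A + f j = sum f A + x"
proof -
  have "sum (f(j := x)) A = x + sum (f(j:=x)) (A - {j})" using assms by (simp add: sum.remove)
  also have "sum (f(j:=x)) (A - {j}) = sum f (A - {j})" by (rule sum.cong) auto
  finally show ?thesis using assms by (simp add: sum.remove)
qed

lemma prod_upd:
  fixes f :: "nat \<Rightarrow> 'a::comm_monoid_mult"
  assumes "finite A" "j \<in> A"
  shows "prod (\<lambda>l. g l ((a(j := x)) l)) A = g j x * prod (\<lambda>l. g l (a l)) (A - {j})"
proof -
  have "prod (\<lambda>l. g l ((a(j := x)) l)) A = g j x * prod (\<lambda>l. g l ((a(j := x)) l)) (A - {j})"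
    using assms by (simp add: prod.remove)
  also have "prod (\<lambda>l. g l ((a(j := x)) l)) (A - {j}) = prod (\<lambda>l. g l (a l)) (A - {j})"
    by (rule prod.cong) auto
  finally show ?thesis .
qed

definition tot :: "nat \<Rightarrow> (nat \<Rightarrow> nat) \<Rightarrow> nat" where "tot N a = (\<Sum>j<N. a j)"

fun mnk :: "nat \<Rightarrow> nat \<Rightarrow> (nat \<Rightarrow> nat) \<Rightarrow> nat" where
  "mnk N 0 a = 1"
| "mnk N (Suc k) a = (\<Sum>j<N. if 0 < a j then mnk N k (a(j := a j - 1)) else 0)"

definition mn :: "nat \<Rightarrow> (nat \<Rightarrow> nat) \<Rightarrow> nat" where "mn N a = mnk N (tot N a) a"

definition cpow :: "nat \<Rightarrow> (nat \<Rightarrow> 'a::comm_monoid_mult) \<Rightarrow> (nat \<Rightarrow> nat) \<Rightarrow> 'a" where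
  "cpow N c a = (\<Prod>j<N. c j ^ a j)"

lemma tot_dec: assumes "j < N" "0 < a j" shows "Suc (tot N (a(j := a j - 1))) = tot N a"
  using sum_upd_nat[of "{..<N}" j a "a j - 1"] assms unfolding tot_def by simp

lemma mn_rec: assumes "0 < tot N a"
  shows "mn N a = (\<Sum>j<N. if 0 < a j then mn N (a(j := a j - 1)) else 0)"
proof -
  obtain k where k: "tot N a = Suc k" using assms by (cases "tot N a") auto
  have "mn N a = (\<Sum>j<N. if 0 < a j then mnk N k (a(j := a j - 1)) else 0)"
    unfolding mn_def k by simp
  also have "\<dots> = (\<Sum>j<N. if 0 < a j then mn N (a(j := a j - 1)) else 0)"
    by (rule sum.cong) (auto simp: mn_def dest!: tot_dec[of _ N a] simp: k)
  finally show ?thesis .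
qed

lemma mn_zero: "tot N a = 0 \<Longrightarrow> mn N a = 1" by (simp add: mn_def)

lemma mnk_fact: "tot N a = k \<Longrightarrow> mnk N k a * (\<Prod>j<N. fact (a j)) = fact k"
proof (induction k arbitrary: a)
  case 0
  then have "\<forall>j<N. a j = 0" by (auto simp: tot_def)
  then show ?case by simp
next
  case (Suc k)
  have "mnk N (Suc k) a * (\<Prod>j<N. fact (a j)) =
     (\<Sum>j<N. if 0 < a j then mnk N k (a(j := a j - 1)) * (\<Prod>l<N. fact (a l)) else 0)"
    unfolding mnk.simps sum_distrib_right by (rule sum.cong) auto
  also have "\<dots> = (\<Sum>j<N. a j * fact k)"
  proof (rule sum.cong)
    fix j assume j: "j \<in> {..<N}"
    show "(if 0 < a j then mnk N k (a(j := a j - 1)) * (\<Prod>l<N. fact (a l)) else 0) = a j * fact k"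
    proof (cases "0 < a j")
      case True
      have t: "tot N (a(j := a j - 1)) = k" using tot_dec[of j N a] j True Suc.prems by simp
      have p1: "(\<Prod>l<N. fact (a l)) = fact (a j) * (\<Prod>l\<in>{..<N}-{j}. fact (a l))"
        using j by (simp add: prod.remove)
      have p2: "(\<Prod>l<N. fact ((a(j := a j - 1)) l)) = fact (a j - 1) * (\<Prod>l\<in>{..<N}-{j}. fact (a l))"
        using prod_upd[of "{..<N}" j "\<lambda>_ x. fact x" a "a j - 1"] j by simp
      have fj: "fact (a j) = a j * (fact (a j - 1) :: nat)"
      proof -
        obtain k' where "a j = Suc k'" using True by (cases "a j") auto
        then show ?thesis by simp
      qed
      have "mnk N k (a(j := a j - 1)) * (\<Prod>l<N. fact (a l)) =
            a j * (mnk N k (a(j := a j - 1)) * (\<Prod>l<N. fact ((a(j := a j - 1)) l)))"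
        unfolding p1 p2 fj by (simp add: algebra_simps)
      also have "\<dots> = a j * fact k" by (simp only: Suc.IH[OF t])
      finally show ?thesis using True by simp
    qed simp
  qed simp
  also have "\<dots> = (\<Sum>j<N. a j) * fact k" by (simp add: sum_distrib_right)
  also have "\<dots> = Suc k * fact k" using Suc.prems by (simp only: tot_def)
  finally show ?case by simp
qed

lemma mn_fact: "mn N a = fact (tot N a) div (\<Prod>j<N. fact (a j))"
proof -
  have e: "fact (tot N a) = mn N a * (\<Prod>j<N. fact (a j))" using mnk_fact unfolding mn_def by metis
  have "(\<Prod>j<N. fact (a j)) \<noteq> (0::nat)" by simp
  then show ?thesis unfolding e by simp
qed

lemma mn_single: "(\<forall>j<N. j \<noteq> k \<longrightarrow> a j = 0) \<Longrightarrow> mn N a = 1"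
proof -
  have "\<And>a. tot N a = t \<Longrightarrow> (\<forall>j<N. j \<noteq> k \<longrightarrow> a j = 0) \<Longrightarrow> mnk N t a = 1" for t
  proof (induction t)
    case (Suc t)
    have "(\<Sum>j<N. if 0 < a j then mnk N t (a(j := a j - 1)) else 0) =
          (\<Sum>j<N. if j = k then 1 else 0)"
    proof (rule sum.cong)
      fix j assume j: "j \<in> {..<N}"
      show "(if 0 < a j then mnk N t (a(j := a j - 1)) else 0) = (if j = k then 1 else 0)"
      proof (cases "j = k")
        case True
        have "0 < a j"
        proof (rule ccontr)
          assume "\<not> 0 < a j"
          then have "\<forall>l<N. a l = 0" using Suc.prems True by auto
          then show False using Suc.prems by (simp add: tot_def)
        qed
        moreover have "tot N (a(j := a j - 1)) = t" using tot_dec[of j N a] j Suc.prems \<open>0 < a j\<close> by simp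
        moreover have p2: "\<forall>l<N. l \<noteq> k \<longrightarrow> (a(j := a j - 1)) l = 0" using Suc.prems True by simp
        moreover have "mnk N t (a(j := a j - 1)) = 1"
          using Suc.IH[OF \<open>tot N (a(j := a j - 1)) = t\<close> p2] .
        ultimately show ?thesis using True by simp
      qed (use Suc.prems j in auto)
    qed simp
    also have "\<dots> = 1"
    proof -
      have "k < N"
      proof (rule ccontr)
        assume "\<not> k < N" then have "\<forall>l<N. a l = 0" using Suc.prems by auto
        then show False using Suc.prems by (simp add: tot_def)
      qed
      then show ?thesis by simp
    qed
    finally show ?case by simp
  qed simp
  then show "(\<forall>j<N. j \<noteq> k \<longrightarrow> a j = 0) \<Longrightarrow> mn N a = 1" unfolding mn_def by blast
qed

lemma cpow_upd: assumes "j < N"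
  shows "cpow N c (a(j := x)) = c j ^ x * (\<Prod>l\<in>{..<N}-{j}. c l ^ a l)"
proof -
  have "cpow N c (a(j := x)) = c j ^ x * (\<Prod>l\<in>{..<N}-{j}. c l ^ (a(j:=x)) l)"
    unfolding cpow_def using assms by (subst prod.remove[of _ j]) auto
  also have "(\<Prod>l\<in>{..<N}-{j}. c l ^ (a(j:=x)) l) = (\<Prod>l\<in>{..<N}-{j}. c l ^ a l)"
    by (rule prod.cong) auto
  finally show ?thesis .
qed

lemma cpow_dec: assumes "j < N" "0 < a j"
  shows "c j * cpow N c (a(j := a j - 1)) = cpow N (c::nat \<Rightarrow> 'a::comm_monoid_mult) a"
proof -
  obtain k where k: "a j = Suc k" using assms by (cases "a j") auto
  have "cpow N c a = cpow N c (a(j := a j))" by simp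
  also have "\<dots> = c j ^ a j * (\<Prod>l\<in>{..<N}-{j}. c l ^ a l)" by (rule cpow_upd[OF assms(1)])
  finally have 1: "cpow N c a = c j ^ a j * (\<Prod>l\<in>{..<N}-{j}. c l ^ a l)" .
  have 2: "cpow N c (a(j := a j - 1)) = c j ^ k * (\<Prod>l\<in>{..<N}-{j}. c l ^ a l)"
    using cpow_upd[OF assms(1), of c a "a j - 1"] k by simp
  have "c j * cpow N c (a(j := a j - 1)) = c j * (c j ^ k * (\<Prod>l\<in>{..<N}-{j}. c l ^ a l))"
    by (simp only: 2)
  also have "\<dots> = c j ^ a j * (\<Prod>l\<in>{..<N}-{j}. c l ^ a l)" using k by (simp add: mult.assoc)
  also have "\<dots> = cpow N c a" using 1 by simp
  finally show ?thesis .
qed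

lemma R: assumes "0 < tot N b"
  shows "(\<Sum>j<N. if 0 < b j then c j * (of_nat (mn N (b(j := b j - 1))) * cpow N c (b(j := b j - 1))) else 0)
         = of_nat (mn N b) * (cpow N c b :: 'a::field)"
proof -
  have "(\<Sum>j<N. if 0 < b j then c j * (of_nat (mn N (b(j := b j - 1))) * cpow N c (b(j := b j - 1))) else 0)
       = (\<Sum>j<N. of_nat (if 0 < b j then mn N (b(j := b j - 1)) else 0) * cpow N c b)"
  proof (rule sum.cong)
    fix j assume j: "j \<in> {..<N}"
    show "(if 0 < b j then c j * (of_nat (mn N (b(j := b j - 1))) * cpow N c (b(j := b j - 1))) else 0)
       = of_nat (if 0 < b j then mn N (b(j := b j - 1)) else 0) * cpow N c b"
    proof (cases "0 < b j")
      case True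
      have "c j * (of_nat (mn N (b(j := b j - 1))) * cpow N c (b(j := b j - 1)))
          = of_nat (mn N (b(j := b j - 1))) * (c j * cpow N c (b(j := b j - 1)))" by (rule mult.left_commute)
      also have "\<dots> = of_nat (mn N (b(j := b j - 1))) * cpow N c b"
      proof -
        have cd: "c j * cpow N c (b(j := b j - 1)) = cpow N c b" using cpow_dec j True by blast
        show ?thesis by (simp only: cd)
      qed
      finally show ?thesis by (simp only: True if_True)
    qed simp
  qed simp
  also have "\<dots> = of_nat (mn N b) * cpow N c b"
  proof -
    have "of_nat (mn N b) = (\<Sum>j<N. (of_nat (if 0 < b j then mn N (b(j := b j - 1)) else 0) :: 'a))"
      by (subst mn_rec[OF assms]) (simp only: of_nat_sum)
    then show ?thesis by (simp only: sum_distrib_right)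
  qed
  finally show ?thesis .
qed

lemma tot_upd_N: "tot N (a(N := x)) = tot N a"
  unfolding tot_def by (rule sum.cong) auto

lemma mnk_cong: "(\<forall>j<N. a j = a' j) \<Longrightarrow> mnk N k a = mnk N k a'"
proof (induction k arbitrary: a a')
  case (Suc k)
  show ?case
  proof (simp only: mnk.simps, rule sum.cong)
    fix j assume j: "j \<in> {..<N}"
    have aj: "a j = a' j" using Suc.prems j by auto
    have "mnk N k (a(j := a j - 1)) = mnk N k (a'(j := a' j - 1))" by (rule Suc.IH) (use Suc.prems in auto)
    then show "(if 0 < a j then mnk N k (a(j := a j - 1)) else 0) = (if 0 < a' j then mnk N k (a'(j := a' j - 1)) else 0)"
      using aj by simp
  qed simp
qed simp

lemma tot_cong: "(\<forall>j<N. a j = a' j) \<Longrightarrow> tot N a = tot N a'"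
  unfolding tot_def by (rule sum.cong) auto

lemma mn_cong: "(\<forall>j<N. a j = a' j) \<Longrightarrow> mn N a = mn N a'"
  unfolding mn_def using tot_cong[of N a a'] mnk_cong[of N a a'] by simp

lemma cpow_cong: "(\<forall>j<N. a j = a' j) \<Longrightarrow> cpow N c a = cpow N c a'"
  unfolding cpow_def by (rule prod.cong) auto

lemma mb_iff: "a \<in> mono_basis (Suc N) e i \<longleftrightarrow>
   (\<forall>j>N. a j = 0) \<and> (\<forall>j\<le>N. a j < e j) \<and> tot N a + a N = i"
  unfolding mono_basis_def tot_def by (auto simp: less_Suc_eq_le)

lemma lm_split: "lin_mult (Suc N) c f b =
   (\<Sum>j<N. if 0 < b j then c j * f (b(j := b j - 1)) else 0) +
   (if 0 < b N then c N * f (b(N := b N - 1)) else 0)"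
  unfolding lin_mult_def by simp

lemma mb_dec:
  assumes "b \<in> mono_basis (Suc N) e (Suc i)" "j \<le> N" "0 < b j"
  shows "b(j := b j - 1) \<in> mono_basis (Suc N) e i"
proof -
  have b: "(\<forall>j>N. b j = 0)" "(\<forall>j\<le>N. b j < e j)" "tot N b + b N = Suc i" using assms(1) mb_iff by auto
  show ?thesis
  proof (cases "j = N")
    case True
    then show ?thesis using b assms(3) unfolding mb_iff by (auto simp: tot_upd_N)
  next
    case False
    then have jN: "j < N" using assms(2) by simp
    have "Suc (tot N (b(j := b j - 1))) = tot N b" using tot_dec[of j N b, OF jN assms(3)] .
    moreover have "b j < e j" using b(2) jN by simp
    ultimately show ?thesis unfolding mb_iff
    proof (intro conjI allI impI)
      fix l assume "l \<le> N"
      then show "(b(j := b j - 1)) l < e l" using b(2) \<open>b j < e j\<close> by (cases "l = j") auto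
    qed (use b False jN in auto)
  qed
qed

lemma mb_incN:
  assumes "a \<in> mono_basis (Suc N) e i" "Suc (a N) < e N"
  shows "a(N := Suc (a N)) \<in> mono_basis (Suc N) e (Suc i)"
  using assms unfolding mb_iff by (auto simp: tot_upd_N)

lemma lm_comb: "lin_mult n c (\<lambda>a. f a + t * h a) b = lin_mult n c f b + t * lin_mult n c h b"
  unfolding lin_mult_def sum_distrib_left sum.distrib[symmetric] by (rule sum.cong) (auto simp: algebra_simps)

lemma gp_comb: "f \<in> graded_piece n e i \<Longrightarrow> h \<in> graded_piece n e i \<Longrightarrow>
   (\<lambda>a. f a + t * h a) \<in> graded_piece n e i"
  unfolding graded_piece_def by auto

lemma U:
  fixes c :: "nat \<Rightarrow> 'k::field"
  assumes cN: "c N \<noteq> 0" and f: "f \<in> graded_piece (Suc N) e i"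
    and hb: "\<forall>b\<in>mono_basis (Suc N) e (Suc i). 0 < b N \<longrightarrow> lin_mult (Suc N) c f b = 0"
    and top: "\<forall>a\<in>mono_basis (Suc N) e i. Suc (a N) = e N \<longrightarrow> f a = 0"
  shows "f a = 0"
proof (induction "e N - a N" arbitrary: a rule: less_induct)
  case less
  show ?case
  proof (cases "a \<in> mono_basis (Suc N) e i")
    case False
    then show ?thesis using f unfolding graded_piece_def by auto
  next
    case True
    have aN: "a N < e N" using True unfolding mb_iff by auto
    show ?thesis
    proof (cases "Suc (a N) = e N")
      case True2: True
      then show ?thesis using top True by auto
    next
      case False
      then have lt: "Suc (a N) < e N" using aN by simp
      define b where "b = a(N := Suc (a N))"
      have bB: "b \<in> mono_basis (Suc N) e (Suc i)" unfolding b_def by (rule mb_incN[OF True lt])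
      have bN: "b N = Suc (a N)" unfolding b_def by simp
      have ba: "b(N := b N - 1) = a" unfolding b_def by simp
      have "(\<Sum>j<N. if 0 < b j then c j * f (b(j := b j - 1)) else 0) = 0"
      proof (rule sum.neutral, intro ballI)
        fix j assume j: "j \<in> {..<N}"
        have "e N - (b(j := b j - 1)) N < e N - a N" using j bN lt by simp
        then have "f (b(j := b j - 1)) = 0" by (rule less.hyps)
        then show "(if 0 < b j then c j * f (b(j := b j - 1)) else 0) = 0" by simp
      qed
      then have "lin_mult (Suc N) c f b = c N * f a" unfolding lm_split using ba bN by simp
      moreover have "lin_mult (Suc N) c f b = 0" using hb bB bN by simp
      ultimately show ?thesis using cN by simp
    qed
  qed
qed

lemma E:
  fixes c :: "nat \<Rightarrow> 'k::field"
  assumes cN: "c N \<noteq> 0"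
  shows "\<exists>f\<in>graded_piece (Suc N) e i. \<forall>b\<in>mono_basis (Suc N) e (Suc i).
            0 < b N \<longrightarrow> lin_mult (Suc N) c f b = g b"
proof -
  have "\<exists>f\<in>graded_piece (Suc N) e i. \<forall>b\<in>mono_basis (Suc N) e (Suc i).
            0 < b N \<and> e N \<le> b N + k \<longrightarrow> lin_mult (Suc N) c f b = g b" for k
  proof (induction k)
    case 0
    have "(\<lambda>a. 0) \<in> graded_piece (Suc N) e i" unfolding graded_piece_def by simp
    moreover have "\<forall>b\<in>mono_basis (Suc N) e (Suc i). \<not> (e N \<le> b N + 0)"
    proof
      fix b assume "b \<in> mono_basis (Suc N) e (Suc i)"
      then have "b N < e N" unfolding mb_iff by auto
      then show "\<not> (e N \<le> b N + 0)" by simp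
    qed
    ultimately show ?case by blast
  next
    case (Suc k)
    then obtain f where f: "f \<in> graded_piece (Suc N) e i"
      and hf: "\<forall>b\<in>mono_basis (Suc N) e (Suc i). 0 < b N \<and> e N \<le> b N + k \<longrightarrow> lin_mult (Suc N) c f b = g b"
      by blast
    define f' where "f' a = f a + (if a \<in> mono_basis (Suc N) e i \<and> a N + 2 + k = e N
        then (g (a(N := Suc (a N))) - lin_mult (Suc N) c f (a(N := Suc (a N)))) / c N else 0)" for a
    have f'G: "f' \<in> graded_piece (Suc N) e i" using f unfolding graded_piece_def f'_def by auto
    have "lin_mult (Suc N) c f' b = g b" if bB: "b \<in> mono_basis (Suc N) e (Suc i)" and bN: "0 < b N"
       and le: "e N \<le> b N + Suc k" for b
    proof -
      have s: "(\<Sum>j<N. if 0 < b j then c j * f' (b(j := b j - 1)) else 0) =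
               (\<Sum>j<N. if 0 < b j then c j * f (b(j := b j - 1)) else 0)"
      proof (rule sum.cong)
        fix j assume j: "j \<in> {..<N}"
        have "\<not> ((b(j := b j - 1)) N + 2 + k = e N)" using j le by auto
        then show "(if 0 < b j then c j * f' (b(j := b j - 1)) else 0) =
               (if 0 < b j then c j * f (b(j := b j - 1)) else 0)" unfolding f'_def by simp
      qed simp
      define a where "a = b(N := b N - 1)"
      have aB: "a \<in> mono_basis (Suc N) e i" unfolding a_def using mb_dec[OF bB _ bN] by simp
      have ab: "a(N := Suc (a N)) = b" unfolding a_def using bN by auto
      have aN: "a N = b N - 1" unfolding a_def by simp
      show ?thesis
      proof (cases "e N \<le> b N + k")
        case True
        then have "f' a = f a" unfolding f'_def using aN bN by auto
        then have "lin_mult (Suc N) c f' b = lin_mult (Suc N) c f b"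
          unfolding lm_split s a_def by simp
        then show ?thesis using hf bB bN True by simp
      next
        case False
        then have eq: "a N + 2 + k = e N" using le aN bN by simp
        have "f' a = f a + (g b - lin_mult (Suc N) c f b) / c N"
          unfolding f'_def using aB eq ab by simp
        then have "lin_mult (Suc N) c f' b = lin_mult (Suc N) c f b + c N * ((g b - lin_mult (Suc N) c f b) / c N)"
          unfolding lm_split s using bN unfolding a_def by (simp add: algebra_simps)
        then show ?thesis using cN by simp
      qed
    qed
    then show ?case using f'G by blast
  qed
  from this[of "e N"] show ?thesis by auto
qed

definition Hq :: "nat \<Rightarrow> (nat \<Rightarrow> nat) \<Rightarrow> (nat \<Rightarrow> 'k::field) \<Rightarrow> nat \<Rightarrow> (nat \<Rightarrow> nat) \<Rightarrow> 'k" where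
  "Hq N e c i a = (if a \<in> mono_basis (Suc N) e i
     then (-1 / c N) ^ (tot N a - (Suc i - e N)) * (of_nat (mn N a) * cpow N c a) else 0)"

lemma H1: "Hq N e c i \<in> graded_piece (Suc N) e i"
  unfolding graded_piece_def Hq_def by auto

lemma tot_le: "\<forall>j<N. b j \<le> t j \<Longrightarrow> tot N b \<le> tot N t"
  unfolding tot_def by (rule sum_mono) auto

lemma T: assumes "\<forall>j<N. b j \<le> t j" "tot N t \<le> tot N b" shows "\<forall>j<N. b j = t j"
proof -
  have eq: "tot N b = tot N t" using tot_le[OF assms(1)] assms(2) by simp
  show ?thesis
  proof (intro allI impI)
    fix j assume "j < N"
    then show "b j = t j" using sum_mono_inv[of b "{..<N}" t j] eq assms(1) unfolding tot_def by auto
  qed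
qed

lemma tot0: "tot N a = 0 \<Longrightarrow> j < N \<Longrightarrow> a j = 0"
  unfolding tot_def by simp

lemma cpow0: "\<forall>j<N. a j = 0 \<Longrightarrow> cpow N c a = 1"
  unfolding cpow_def by simp

lemma H4:
  assumes "a \<in> mono_basis (Suc N) e i" "Suc (a N) = e N" "Suc i = e N"
  shows "Hq N e c i a = 1"
proof -
  have t: "tot N a = 0" using assms unfolding mb_iff by simp
  have "\<forall>j<N. a j = 0" using tot0[OF t] by blast
  then show ?thesis unfolding Hq_def using assms(1) t mn_zero[OF t] cpow0 by simp
qed

lemma H2:
  fixes c :: "nat \<Rightarrow> 'k::field"
  assumes cN: "c N \<noteq> 0" and ei: "e N \<le> Suc i"
    and bB: "b \<in> mono_basis (Suc N) e (Suc i)" and bN: "0 < b N"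
  shows "lin_mult (Suc N) c (Hq N e c i) b = 0"
proof -
  define q where "q = Suc i - e N"
  have tb: "tot N b + b N = Suc i" "b N < e N" using bB unfolding mb_iff by auto
  have qt: "Suc q \<le> tot N b" using tb ei unfolding q_def by simp
  define K where "K = tot N b - Suc q"
  define X where "X = of_nat (mn N b) * cpow N c b"
  have s: "(\<Sum>j<N. if 0 < b j then c j * Hq N e c i (b(j := b j - 1)) else 0) = (-1 / c N) ^ K * X"
  proof -
    have "(\<Sum>j<N. if 0 < b j then c j * Hq N e c i (b(j := b j - 1)) else 0) =
      (\<Sum>j<N. (-1 / c N) ^ K * (if 0 < b j then c j * (of_nat (mn N (b(j := b j - 1))) * cpow N c (b(j := b j - 1))) else 0))"
    proof (rule sum.cong)
      fix j assume j: "j \<in> {..<N}"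
      show "(if 0 < b j then c j * Hq N e c i (b(j := b j - 1)) else 0) =
         (-1 / c N) ^ K * (if 0 < b j then c j * (of_nat (mn N (b(j := b j - 1))) * cpow N c (b(j := b j - 1))) else 0)"
      proof (cases "0 < b j")
        case True
        have mem: "b(j := b j - 1) \<in> mono_basis (Suc N) e i" using mb_dec[OF bB _ True] j by simp
        have "Suc (tot N (b(j := b j - 1))) = tot N b" using tot_dec[of j N b] j True by simp
        then have ex: "tot N (b(j := b j - 1)) - (Suc i - e N) = K" unfolding K_def q_def by simp
        show ?thesis unfolding Hq_def using mem ex True by (simp add: algebra_simps)
      qed simp
    qed simp
    also have "\<dots> = (-1 / c N) ^ K * X"
      unfolding X_def by (simp only: sum_distrib_left[symmetric] R[of N b c] qt) (use qt in \<open>simp add: R\<close>)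
    finally show ?thesis .
  qed
  define a where "a = b(N := b N - 1)"
  have aB: "a \<in> mono_basis (Suc N) e i" unfolding a_def using mb_dec[OF bB _ bN] by simp
  have ta: "tot N a = tot N b" unfolding a_def by (rule tot_upd_N)
  have "mn N a = mn N b" unfolding a_def by (rule mn_cong) simp
  moreover have "cpow N c a = cpow N c b" unfolding a_def by (rule cpow_cong) simp
  ultimately have Ha: "Hq N e c i a = (-1 / c N) ^ Suc K * X"
    unfolding Hq_def X_def using aB ta qt unfolding K_def q_def by (simp add: Suc_diff_Suc)
  have "lin_mult (Suc N) c (Hq N e c i) b = (-1 / c N) ^ K * X + c N * ((-1 / c N) ^ Suc K * X)"
    unfolding lm_split s using bN Ha unfolding a_def by simp
  also have "\<dots> = 0" using cN by (simp add: field_simps)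
  finally show ?thesis .
qed

lemma H3:
  fixes c :: "nat \<Rightarrow> 'k::field"
  assumes ei: "e N \<le> Suc i" and e1: "0 < e N"
    and bB: "b \<in> mono_basis (Suc N) e (Suc i)" and bN: "b N = 0"
  shows "lin_mult (Suc N) c (Hq N e c i) b = (-1 / c N) ^ (e N - 1) * (of_nat (mn N b) * cpow N c b)"
proof -
  have tb: "tot N b = Suc i" using bB bN unfolding mb_iff by auto
  have "(\<Sum>j<N. if 0 < b j then c j * Hq N e c i (b(j := b j - 1)) else 0) =
      (\<Sum>j<N. (-1 / c N) ^ (e N - 1) * (if 0 < b j then c j * (of_nat (mn N (b(j := b j - 1))) * cpow N c (b(j := b j - 1))) else 0))"
  proof (rule sum.cong)
    fix j assume j: "j \<in> {..<N}"
    show "(if 0 < b j then c j * Hq N e c i (b(j := b j - 1)) else 0) =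
       (-1 / c N) ^ (e N - 1) * (if 0 < b j then c j * (of_nat (mn N (b(j := b j - 1))) * cpow N c (b(j := b j - 1))) else 0)"
    proof (cases "0 < b j")
      case True
      have mem: "b(j := b j - 1) \<in> mono_basis (Suc N) e i" using mb_dec[OF bB _ True] j by simp
      have "Suc (tot N (b(j := b j - 1))) = tot N b" using tot_dec[of j N b] j True by simp
      then have ex: "tot N (b(j := b j - 1)) - (Suc i - e N) = e N - 1" using tb ei e1 by simp
      show ?thesis unfolding Hq_def using mem ex True by (simp add: algebra_simps)
    qed simp
  qed simp
  also have "\<dots> = (-1 / c N) ^ (e N - 1) * (of_nat (mn N b) * cpow N c b)"
    using tb by (simp add: sum_distrib_left[symmetric] R)
  finally show ?thesis unfolding lm_split using bN by simp
qed

definition topv :: "nat \<Rightarrow> (nat \<Rightarrow> nat) \<Rightarrow> nat \<Rightarrow> nat" where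
  "topv N e = (\<lambda>j. if j < N then e j - 1 else 0)"

definition u0 :: "nat \<Rightarrow> (nat \<Rightarrow> nat) \<Rightarrow> nat \<Rightarrow> nat" where
  "u0 N e = (\<lambda>j. if j = N then e N - 1 else 0)"

lemma mb_le: "b \<in> mono_basis (Suc N) e k \<Longrightarrow> \<forall>j<N. b j \<le> topv N e j"
proof (intro allI impI)
  fix j assume "b \<in> mono_basis (Suc N) e k" "j < N"
  then have "b j < e j" unfolding mb_iff by auto
  then show "b j \<le> topv N e j" using \<open>j < N\<close> by (simp add: topv_def)
qed

lemma mb_tot_le: "b \<in> mono_basis (Suc N) e k \<Longrightarrow> tot N b \<le> tot N (topv N e)"
  by (rule tot_le) (rule mb_le)

lemma top_mem: assumes "\<forall>j<N. 0 < e j" "0 < e N"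
  shows "topv N e \<in> mono_basis (Suc N) e (tot N (topv N e))"
  unfolding mb_iff using assms by (auto simp: topv_def)

lemma top_uniq: assumes "b \<in> mono_basis (Suc N) e k" "b N = 0" "tot N (topv N e) \<le> tot N b"
  shows "b = topv N e"
proof
  fix j
  have b: "\<forall>j>N. b j = 0" "\<forall>j\<le>N. b j < e j" using assms(1) unfolding mb_iff by auto
  have "\<forall>j<N. b j = topv N e j"
    by (rule T[OF mb_le[OF assms(1)] assms(3)])
  then show "b j = topv N e j" using b assms(2) unfolding topv_def
    by (cases "j < N"; cases "j = N") auto
qed

lemma u0_mem: "\<forall>j<N. 0 < e j \<Longrightarrow> 0 < e N \<Longrightarrow> Suc i = e N \<Longrightarrow> u0 N e \<in> mono_basis (Suc N) e i"
  unfolding mb_iff u0_def tot_def by auto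

lemma u0_uniq: assumes "a \<in> mono_basis (Suc N) e i" "Suc (a N) = e N" "Suc i = e N"
  shows "a = u0 N e"
proof
  fix j
  have t: "tot N a = 0" and b: "\<forall>j>N. a j = 0" using assms unfolding mb_iff by auto
  show "a j = u0 N e j" using tot0[OF t, of j] b assms(2) unfolding u0_def
    by (cases "j < N"; cases "j = N") auto
qed

lemma inj_zero: "e N = 0 \<Longrightarrow> mult_injective (Suc N) e c i"
  unfolding mult_injective_def graded_piece_def mb_iff by auto

lemma INJ_low:
  fixes c :: "nat \<Rightarrow> 'k::field"
  assumes cN: "c N \<noteq> 0" and lt: "Suc i < e N"
  shows "mult_injective (Suc N) e c i"
  unfolding mult_injective_def
proof (intro ballI impI allI)
  fix f :: "(nat \<Rightarrow> nat) \<Rightarrow> 'k" and a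
  assume f: "f \<in> graded_piece (Suc N) e i" and h: "\<forall>b\<in>mono_basis (Suc N) e (Suc i). lin_mult (Suc N) c f b = 0"
  have top: "\<forall>a\<in>mono_basis (Suc N) e i. Suc (a N) = e N \<longrightarrow> f a = 0"
    proof (intro ballI impI)
      fix a assume "a \<in> mono_basis (Suc N) e i" "Suc (a N) = e N"
      then have "tot N a + a N = i" "Suc (a N) = e N" unfolding mb_iff by auto
      then show "f a = 0" using lt by simp
    qed
  have hb: "\<forall>b\<in>mono_basis (Suc N) e (Suc i). 0 < b N \<longrightarrow> lin_mult (Suc N) c f b = 0"
    using h by blast
  show "f a = 0" by (rule U[where c=c and N=N and f=f and a=a, OF cN f hb top])
qed

lemma UH:
  fixes c :: "nat \<Rightarrow> 'k::field"
  assumes cN: "c N \<noteq> 0" and ie: "Suc i = e N" and f: "f \<in> graded_piece (Suc N) e i"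
    and h: "\<forall>b\<in>mono_basis (Suc N) e (Suc i). 0 < b N \<longrightarrow> lin_mult (Suc N) c f b = 0"
  shows "f a = f (u0 N e) * Hq N e c i a"
proof -
  define g where "g = (\<lambda>a. f a + (- f (u0 N e)) * Hq N e c i a)"
  have "g a = 0"
  proof (rule U[where c=c and N=N and f=g and a=a, OF cN])
    show "g \<in> graded_piece (Suc N) e i"
      unfolding g_def by (rule gp_comb[OF f H1])
    show "\<forall>b\<in>mono_basis (Suc N) e (Suc i). 0 < b N \<longrightarrow> lin_mult (Suc N) c g b = 0"
      using h H2[where c=c and N=N, OF cN, of e i] ie unfolding g_def lm_comb by simp
    show "\<forall>a\<in>mono_basis (Suc N) e i. Suc (a N) = e N \<longrightarrow> g a = 0"
    proof (intro ballI impI)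
      fix a assume a: "a \<in> mono_basis (Suc N) e i" "Suc (a N) = e N"
      then have "a = u0 N e" using u0_uniq ie by blast
      moreover have "Hq N e c i a = 1" using H4[OF a ie] .
      ultimately show "g a = 0" unfolding g_def by simp
    qed
  qed
  then show ?thesis unfolding g_def by simp
qed

lemma LMH_cong: "(\<forall>a. f a = t * h a) \<Longrightarrow> lin_mult n c f b = t * lin_mult n c h b"
  unfolding lin_mult_def sum_distrib_left by (rule sum.cong) (auto simp: algebra_simps)

lemma INJ_mid:
  fixes c :: "nat \<Rightarrow> 'k::field"
  assumes cN: "c N \<noteq> 0" and ie: "Suc i = e N"
    and bz: "bz \<in> mono_basis (Suc N) e (Suc i)" "bz N = 0" "of_nat (mn N bz) * cpow N c bz \<noteq> 0"
  shows "mult_injective (Suc N) e c i"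
  unfolding mult_injective_def
proof (intro ballI impI allI)
  fix f :: "(nat \<Rightarrow> nat) \<Rightarrow> 'k" and a
  assume f: "f \<in> graded_piece (Suc N) e i" and h: "\<forall>b\<in>mono_basis (Suc N) e (Suc i). lin_mult (Suc N) c f b = 0"
  have hb: "\<forall>b\<in>mono_basis (Suc N) e (Suc i). 0 < b N \<longrightarrow> lin_mult (Suc N) c f b = 0"
    using h by blast
  have fa: "\<forall>a. f a = f (u0 N e) * Hq N e c i a"
    by (intro allI) (rule UH[where c=c and N=N, OF cN ie f hb])
  have "lin_mult (Suc N) c f bz = f (u0 N e) * lin_mult (Suc N) c (Hq N e c i) bz"
    by (rule LMH_cong[OF fa])
  also have "lin_mult (Suc N) c (Hq N e c i) bz = (-1 / c N) ^ (e N - 1) * (of_nat (mn N bz) * cpow N c bz)"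
    by (rule H3) (use ie bz in auto)
  finally have "f (u0 N e) * ((-1 / c N) ^ (e N - 1) * (of_nat (mn N bz) * cpow N c bz)) = lin_mult (Suc N) c f bz"
    by simp
  also have "\<dots> = 0" using h bz(1) by blast
  finally have "f (u0 N e) * ((-1 / c N) ^ (e N - 1) * (of_nat (mn N bz) * cpow N c bz)) = 0" .
  then have z: "f (u0 N e) = 0" using bz(3) cN by simp
  have "f a = f (u0 N e) * Hq N e c i a" using fa by blast
  also have "\<dots> = 0" by (simp only: z mult_zero_left)
  finally show "f a = 0" .
qed

lemma SURJ_high:
  fixes c :: "nat \<Rightarrow> 'k::field"
  assumes cN: "c N \<noteq> 0" and hb: "\<forall>b\<in>mono_basis (Suc N) e (Suc i). 0 < b N"
  shows "mult_surjective (Suc N) e c i"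
  unfolding mult_surjective_def
proof
  fix g :: "(nat \<Rightarrow> nat) \<Rightarrow> 'k"
  from E[where c=c and N=N, OF cN, of e i g] obtain f where "f \<in> graded_piece (Suc N) e i"
    "\<forall>b\<in>mono_basis (Suc N) e (Suc i). 0 < b N \<longrightarrow> lin_mult (Suc N) c f b = g b" by blast
  then show "\<exists>f\<in>graded_piece (Suc N) e i. \<forall>b\<in>mono_basis (Suc N) e (Suc i). lin_mult (Suc N) c f b = g b"
    using hb by blast
qed

lemma SURJ_mid:
  fixes c :: "nat \<Rightarrow> 'k::field"
  assumes cN: "c N \<noteq> 0" and ei: "e N \<le> Suc i" and e1: "0 < e N"
    and bz: "bz \<in> mono_basis (Suc N) e (Suc i)" "bz N = 0" "of_nat (mn N bz) * cpow N c bz \<noteq> 0"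
    and uq: "\<forall>b\<in>mono_basis (Suc N) e (Suc i). b N = 0 \<longrightarrow> b = bz"
  shows "mult_surjective (Suc N) e c i"
  unfolding mult_surjective_def
proof
  fix g :: "(nat \<Rightarrow> nat) \<Rightarrow> 'k"
  from E[where c=c and N=N, OF cN, of e i g] obtain F where F: "F \<in> graded_piece (Suc N) e i"
    "\<forall>b\<in>mono_basis (Suc N) e (Suc i). 0 < b N \<longrightarrow> lin_mult (Suc N) c F b = g b" by blast
  define v where "v = lin_mult (Suc N) c (Hq N e c i) bz"
  have v: "v = (-1 / c N) ^ (e N - 1) * (of_nat (mn N bz) * cpow N c bz)"
    unfolding v_def by (rule H3) (use ei e1 bz in auto)
  then have v0: "v \<noteq> 0" using cN bz(3) by simp
  define t where "t = (g bz - lin_mult (Suc N) c F bz) / v"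
  define f where "f a = F a + t * Hq N e c i a" for a
  have "f \<in> graded_piece (Suc N) e i" unfolding f_def by (rule gp_comb[OF F(1) H1])
  moreover have "\<forall>b\<in>mono_basis (Suc N) e (Suc i). lin_mult (Suc N) c f b = g b"
  proof
    fix b assume bB: "b \<in> mono_basis (Suc N) e (Suc i)"
    have lf: "lin_mult (Suc N) c f b = lin_mult (Suc N) c F b + t * lin_mult (Suc N) c (Hq N e c i) b"
      unfolding f_def by (rule lm_comb)
    show "lin_mult (Suc N) c f b = g b"
    proof (cases "0 < b N")
      case True
      then show ?thesis using lf F(2) bB H2[where c=c and N=N, OF cN ei bB True] by simp
    next
      case False
      then have "b = bz" using uq bB by simp
      then show ?thesis using lf v0 unfolding t_def v_def by simp
    qed
  qed
  ultimately show "\<exists>f\<in>graded_piece (Suc N) e i. \<forall>b\<in>mono_basis (Suc N) e (Suc i). lin_mult (Suc N) c f b = g b"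
    by blast
qed

lemma cpow1: "cpow N (\<lambda>_. 1::'k::field) a = 1"
  unfolding cpow_def by simp

lemma top_tot_mem: assumes "\<forall>j<N. 0 < e j" "0 < e N" "tot N (topv N e) = k"
  shows "topv N e \<in> mono_basis (Suc N) e k"
  using top_mem[OF assms(1,2)] assms(3) by simp

lemma no_low: assumes "tot N (topv N e) < Suc i"
  shows "\<forall>b\<in>mono_basis (Suc N) e (Suc i). 0 < b N"
proof
  fix b assume b: "b \<in> mono_basis (Suc N) e (Suc i)"
  have "tot N b + b N = Suc i" using b unfolding mb_iff by auto
  moreover have "tot N b \<le> tot N (topv N e)" by (rule mb_tot_le[OF b])
  ultimately show "0 < b N" using assms by simp
qed

lemma posA:
  assumes epos: "\<forall>j<N. 0 < e j" and eN: "e N = tot N (topv N e)"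
    and nz: "of_nat (mn N (topv N e)) \<noteq> (0::'k::field)"
  shows "has_WLP TYPE('k) (Suc N) e"
  unfolding has_WLP_def
proof (intro exI allI)
  fix i
  let ?c = "\<lambda>_. 1::'k"
  have cN: "?c N \<noteq> 0" by simp
  show "mult_injective (Suc N) e ?c i \<or> mult_surjective (Suc N) e ?c i"
  proof (cases "e N = 0")
    case True then show ?thesis using inj_zero by blast
  next
    case False
    consider "Suc i < e N" | "Suc i = e N" | "e N < Suc i" by linarith
    then show ?thesis
    proof cases
      case 1 then show ?thesis using INJ_low[of ?c N i e] by simp
    next
      case 2
      have "mult_injective (Suc N) e ?c i"
      proof (rule INJ_mid[where c="?c" and N=N and e=e and i=i and bz="topv N e", OF cN 2])
        show "topv N e \<in> mono_basis (Suc N) e (Suc i)"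
          by (rule top_tot_mem) (use epos False eN 2 in auto)
        show "topv N e N = 0" by (simp add: topv_def)
        show "of_nat (mn N (topv N e)) * cpow N ?c (topv N e) \<noteq> 0" using nz by (simp add: cpow1)
      qed
      then show ?thesis by blast
    next
      case 3
      have "mult_surjective (Suc N) e ?c i"
        by (rule SURJ_high[where c="?c" and N=N and e=e and i=i, OF cN no_low]) (use 3 eN in simp)
      then show ?thesis by blast
    qed
  qed
qed

lemma posB:
  assumes epos: "\<forall>j<N. 0 < e j" and eN: "Suc (e N) = tot N (topv N e)"
    and nz: "of_nat (mn N (topv N e)) \<noteq> (0::'k::field)"
  shows "has_WLP TYPE('k) (Suc N) e"
  unfolding has_WLP_def
proof (intro exI allI)
  fix i
  let ?c = "\<lambda>_. 1::'k"
  have cN: "?c N \<noteq> 0" by simp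
  show "mult_injective (Suc N) e ?c i \<or> mult_surjective (Suc N) e ?c i"
  proof (cases "e N = 0")
    case True then show ?thesis using inj_zero by blast
  next
    case False
    have tm: "topv N e \<in> mono_basis (Suc N) e (Suc (e N))"
      by (rule top_tot_mem) (use epos False eN in auto)
    consider "Suc i < e N" | "Suc i = e N" | "Suc i = Suc (e N)" | "Suc (e N) < Suc i" by linarith
    then show ?thesis
    proof cases
      case 1 then show ?thesis using INJ_low[of ?c N i e] by simp
    next
      case 2
      have "of_nat (mn N (topv N e)) = (\<Sum>j<N. (of_nat (if 0 < topv N e j then mn N ((topv N e)(j := topv N e j - 1)) else 0) :: 'k))"
        by (subst mn_rec) (use eN in \<open>simp_all add: of_nat_sum\<close>)
      with nz obtain j where j: "j < N"
        "(of_nat (if 0 < topv N e j then mn N ((topv N e)(j := topv N e j - 1)) else 0) :: 'k) \<noteq> 0"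
        by (metis (no_types, lifting) lessThan_iff sum.neutral)
      have tj: "0 < topv N e j" using j(2) by (cases "0 < topv N e j") auto
      have mj: "(of_nat (mn N ((topv N e)(j := topv N e j - 1))) :: 'k) \<noteq> 0" using j(2) tj by simp
      have "mult_injective (Suc N) e ?c i"
      proof (rule INJ_mid[where c="?c" and N=N and e=e and i=i and bz="(topv N e)(j := topv N e j - 1)", OF cN 2])
        show "(topv N e)(j := topv N e j - 1) \<in> mono_basis (Suc N) e (Suc i)"
          using mb_dec[OF tm _ tj] j(1) 2 by simp
        show "((topv N e)(j := topv N e j - 1)) N = 0" using j(1) by (simp add: topv_def)
        show "of_nat (mn N ((topv N e)(j := topv N e j - 1))) * cpow N ?c ((topv N e)(j := topv N e j - 1)) \<noteq> 0"
          using mj by (simp add: cpow1)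
      qed
      then show ?thesis by blast
    next
      case 3
      have "mult_surjective (Suc N) e ?c i"
      proof (rule SURJ_mid[where c="?c" and N=N and e=e and i=i and bz="topv N e", OF cN])
        show "e N \<le> Suc i" "0 < e N" using 3 False by auto
        show "topv N e \<in> mono_basis (Suc N) e (Suc i)" using tm 3 by simp
        show "topv N e N = 0" by (simp add: topv_def)
        show "of_nat (mn N (topv N e)) * cpow N ?c (topv N e) \<noteq> 0" using nz by (simp add: cpow1)
        show "\<forall>b\<in>mono_basis (Suc N) e (Suc i). b N = 0 \<longrightarrow> b = topv N e"
        proof (intro ballI impI)
          fix b assume b: "b \<in> mono_basis (Suc N) e (Suc i)" "b N = 0"
          then have "tot N b = Suc i" unfolding mb_iff by auto
          then show "b = topv N e" using top_uniq[OF b] 3 eN by simp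
        qed
      qed
      then show ?thesis by blast
    next
      case 4
      have "mult_surjective (Suc N) e ?c i"
        by (rule SURJ_high[where c="?c" and N=N and e=e and i=i, OF cN no_low]) (use 4 eN in simp)
      then show ?thesis by blast
    qed
  qed
qed

lemma two_idx:
  assumes "of_nat (mn N t) \<noteq> (1::'k::field)"
  shows "\<exists>i1 i2. i1 < N \<and> i2 < N \<and> i1 \<noteq> i2 \<and> 0 < t i1 \<and> 0 < t i2"
proof (rule ccontr)
  assume na: "\<not> ?thesis"
  have "\<exists>k. \<forall>j<N. j \<noteq> k \<longrightarrow> t j = 0"
  proof (cases "\<exists>k<N. 0 < t k")
    case True
    then obtain k where k: "k < N" "0 < t k" by blast
    have "\<forall>j<N. j \<noteq> k \<longrightarrow> t j = 0"
    proof (intro allI impI)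
      fix j assume j: "j < N" "j \<noteq> k"
      show "t j = 0"
      proof (rule ccontr)
        assume "t j \<noteq> 0"
        then have "0 < t j" by simp
        then have "\<exists>i1 i2. i1 < N \<and> i2 < N \<and> i1 \<noteq> i2 \<and> 0 < t i1 \<and> 0 < t i2"
          using k j by blast
        then show False using na by blast
      qed
    qed
    then show ?thesis by blast
  next
    case False
    then have "\<forall>j<N. j \<noteq> 0 \<longrightarrow> t j = 0" by auto
    then show ?thesis by blast
  qed
  then obtain k where "\<forall>j<N. j \<noteq> k \<longrightarrow> t j = 0" by blast
  then have "mn N t = 1" by (rule mn_single)
  then show False using assms by simp
qed

lemma topv_dist: assumes "x < N" "y < N" "x \<noteq> y" "0 < topv N e x"
  shows "(topv N e)(x := topv N e x - 1) \<noteq> (topv N e)(y := topv N e y - 1)"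
proof
  assume "(topv N e)(x := topv N e x - 1) = (topv N e)(y := topv N e y - 1)"
  then have "((topv N e)(x := topv N e x - 1)) x = ((topv N e)(y := topv N e y - 1)) x" by simp
  then show False using assms by simp
qed

lemma neg_cN:
  fixes c :: "nat \<Rightarrow> 'k::field"
  assumes epos: "\<forall>j<N. 0 < e j" and eN: "e N = tot N (topv N e)"
    and z: "of_nat (mn N (topv N e)) = (0::'k)" and e1: "0 < e N" and ie: "Suc i = e N"
    and cN: "c N \<noteq> 0"
  shows "\<not> mult_injective (Suc N) e c i \<and> \<not> mult_surjective (Suc N) e c i"
proof -
  have tm: "topv N e \<in> mono_basis (Suc N) e (Suc i)"
    by (rule top_tot_mem) (use epos e1 eN ie in auto)
  have uq: "b = topv N e" if b: "b \<in> mono_basis (Suc N) e (Suc i)" "b N = 0" for b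
  proof -
    have "tot N b = Suc i" using b unfolding mb_iff by auto
    then show ?thesis using top_uniq[OF b] ie eN by simp
  qed
  have Htop: "lin_mult (Suc N) c (Hq N e c i) (topv N e) = 0"
  proof -
    have "lin_mult (Suc N) c (Hq N e c i) (topv N e) = (-1 / c N) ^ (e N - 1) * (of_nat (mn N (topv N e)) * cpow N c (topv N e))"
      by (rule H3) (use ie e1 tm in \<open>auto simp: topv_def\<close>)
    then show ?thesis using z by simp
  qed
  have HB: "\<forall>b\<in>mono_basis (Suc N) e (Suc i). lin_mult (Suc N) c (Hq N e c i) b = 0"
  proof
    fix b assume b: "b \<in> mono_basis (Suc N) e (Suc i)"
    show "lin_mult (Suc N) c (Hq N e c i) b = 0"
    proof (cases "0 < b N")
      case True then show ?thesis using H2[where c=c and N=N, OF cN _ b] ie by simp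
    next
      case False then show ?thesis using uq[OF b] Htop by simp
    qed
  qed
  have um: "u0 N e \<in> mono_basis (Suc N) e i" by (rule u0_mem) (use epos e1 ie in auto)
  have Hu: "Hq N e c i (u0 N e) = 1" by (rule H4[OF um]) (use ie in \<open>auto simp: u0_def\<close>)
  have ni: "\<not> mult_injective (Suc N) e c i"
  proof
    assume "mult_injective (Suc N) e c i"
    then have inj: "\<forall>f\<in>graded_piece (Suc N) e i. (\<forall>b\<in>mono_basis (Suc N) e (Suc i). lin_mult (Suc N) c f b = 0) \<longrightarrow> (\<forall>a. f a = 0)"
      unfolding mult_injective_def .
    have "\<forall>a. Hq N e c i a = 0" using bspec[OF inj H1] HB by (rule mp)
    then show False using Hu by simp
  qed
  have ns: "\<not> mult_surjective (Suc N) e c i"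
  proof
    assume s: "mult_surjective (Suc N) e c i"
    define g where "g = (\<lambda>b. if b = topv N e then (1::'k) else 0)"
    have gG: "g \<in> graded_piece (Suc N) e (Suc i)" unfolding g_def graded_piece_def using tm by auto
    obtain f where f: "f \<in> graded_piece (Suc N) e i"
      and hf: "\<forall>b\<in>mono_basis (Suc N) e (Suc i). lin_mult (Suc N) c f b = g b"
      using s gG unfolding mult_surjective_def by blast
    have hb: "\<forall>b\<in>mono_basis (Suc N) e (Suc i). 0 < b N \<longrightarrow> lin_mult (Suc N) c f b = 0"
    proof (intro ballI impI)
      fix b assume b: "b \<in> mono_basis (Suc N) e (Suc i)" "0 < b N"
      have "topv N e N = 0" by (simp add: topv_def)
      then have "b \<noteq> topv N e" using b(2) by auto
      then show "lin_mult (Suc N) c f b = 0" using hf b(1) unfolding g_def by simp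
    qed
    have fa: "\<forall>a. f a = f (u0 N e) * Hq N e c i a"
      by (intro allI) (rule UH[where c=c and N=N, OF cN ie f hb])
    have "lin_mult (Suc N) c f (topv N e) = f (u0 N e) * lin_mult (Suc N) c (Hq N e c i) (topv N e)"
      by (rule LMH_cong[OF fa])
    also have "\<dots> = 0" using Htop by simp
    finally have "lin_mult (Suc N) c f (topv N e) = 0" .
    moreover have "lin_mult (Suc N) c f (topv N e) = 1" using hf tm unfolding g_def by simp
    ultimately show False by simp
  qed
  show ?thesis using ni ns by blast
qed

lemma neg_c0:
  fixes c :: "nat \<Rightarrow> 'k::field"
  assumes epos: "\<forall>j<N. 0 < e j" and eN: "e N = tot N (topv N e)"
    and i12: "i1 < N" "i2 < N" "i1 \<noteq> i2" "0 < topv N e i1" "0 < topv N e i2"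
    and e1: "0 < e N" and ie: "Suc i = e N"
    and cN: "c N = 0"
  shows "\<not> mult_injective (Suc N) e c i \<and> \<not> mult_surjective (Suc N) e c i"
proof -
  have tm: "topv N e \<in> mono_basis (Suc N) e (Suc i)"
    by (rule top_tot_mem) (use epos e1 eN ie in auto)
  have uq: "b = topv N e" if b: "b \<in> mono_basis (Suc N) e (Suc i)" "b N = 0" for b
  proof -
    have "tot N b = Suc i" using b unfolding mb_iff by auto
    then show ?thesis using top_uniq[OF b] ie eN by simp
  qed
  have um: "u0 N e \<in> mono_basis (Suc N) e i" by (rule u0_mem) (use epos e1 ie in auto)
  define v where "v x = (u0 N e)(x := 1)" for x
  have ex2: "1 < e x" if "x < N" "0 < topv N e x" for x using that by (simp add: topv_def)
  have vmem: "v x \<in> mono_basis (Suc N) e (Suc i)" if x: "x < N" "0 < topv N e x" for x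
  proof -
    have "tot N (v x) = 1"
    proof -
      have "tot N (v x) = (\<Sum>j<N. if j = x then 1 else 0)"
        unfolding tot_def v_def u0_def by (rule sum.cong) auto
      then show ?thesis using x by simp
    qed
    then show ?thesis unfolding mb_iff v_def using ex2[OF x] x ie e1 epos
      by (auto simp: u0_def)
  qed
  have vlm: "lin_mult (Suc N) c f (v x) = c x * f (u0 N e)" if x: "x < N" for f x
  proof -
    have "(\<Sum>j<N. if 0 < v x j then c j * f ((v x)(j := v x j - 1)) else 0) =
          (\<Sum>j<N. if j = x then c x * f (u0 N e) else 0)"
    proof (rule sum.cong)
      fix j assume j: "j \<in> {..<N}"
      show "(if 0 < v x j then c j * f ((v x)(j := v x j - 1)) else 0) = (if j = x then c x * f (u0 N e) else 0)"
      proof (cases "j = x")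
        case True
        have "(v x)(j := v x j - 1) = u0 N e" unfolding v_def True using x
          by (auto simp: u0_def)
        then show ?thesis using True by (simp add: v_def)
      next
        case False
        have "v x j = 0" using False j unfolding v_def u0_def by auto
        then show ?thesis using False by simp
      qed
    qed simp
    also have "\<dots> = c x * f (u0 N e)" using x by simp
    finally show ?thesis unfolding lm_split using cN by simp
  qed
  have vdist: "v i1 \<noteq> v i2"
  proof
    assume "v i1 = v i2"
    then have "v i1 i1 = v i2 i1" by simp
    then show False using i12 unfolding v_def u0_def by auto
  qed
  have ns: "\<not> mult_surjective (Suc N) e c i"
  proof
    assume s: "mult_surjective (Suc N) e c i"
    define w where "w = (if c i1 = 0 then v i1 else v i2)"
    define g where "g = (\<lambda>b. if b = w then (1::'k) else 0)"
    have wm: "w \<in> mono_basis (Suc N) e (Suc i)" unfolding w_def using vmem i12 by auto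
    have gG: "g \<in> graded_piece (Suc N) e (Suc i)" unfolding g_def graded_piece_def using wm by auto
    obtain f where hf: "\<forall>b\<in>mono_basis (Suc N) e (Suc i). lin_mult (Suc N) c f b = g b"
      using s gG unfolding mult_surjective_def by blast
    show False
    proof (cases "c i1 = 0")
      case True
      have "lin_mult (Suc N) c f (v i1) = 0" using vlm[OF i12(1)] True by simp
      moreover have "lin_mult (Suc N) c f (v i1) = 1" using hf vmem[OF i12(1) i12(4)] True
        unfolding g_def w_def by simp
      ultimately show False by simp
    next
      case False
      have "lin_mult (Suc N) c f (v i1) = 0" using hf vmem[OF i12(1) i12(4)] False vdist
        unfolding g_def w_def by simp
      then have "f (u0 N e) = 0" using vlm[OF i12(1)] False by simp
      then have "lin_mult (Suc N) c f (v i2) = 0" using vlm[OF i12(2)] by simp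
      moreover have "lin_mult (Suc N) c f (v i2) = 1" using hf vmem[OF i12(2) i12(5)] False
        unfolding g_def w_def by simp
      ultimately show False by simp
    qed
  qed
  define w where "w x = (topv N e)(x := topv N e x - 1)" for x
  have wmem: "w x \<in> mono_basis (Suc N) e i" if "x < N" "0 < topv N e x" for x
    unfolding w_def using mb_dec[OF tm _ that(2)] that(1) by simp
  have wN: "w x N = 0" if "x < N" for x using that unfolding w_def by (simp add: topv_def)
  have wdist: "w i1 \<noteq> w i2" unfolding w_def by (rule topv_dist) (use i12 in auto)
  define \<alpha> where "\<alpha> = (if c i1 = 0 \<and> c i2 = 0 then (1::'k) else c i2)"
  define \<beta> where "\<beta> = (if c i1 = 0 \<and> c i2 = 0 then (0::'k) else - c i1)"
  define f where "f = (\<lambda>a. (if a = w i1 then \<alpha> else 0) + (if a = w i2 then \<beta> else 0))"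
  have fG: "f \<in> graded_piece (Suc N) e i" unfolding f_def graded_piece_def
    using wmem i12 by auto
  have fnz: "\<exists>a. f a \<noteq> 0"
  proof (cases "c i1 = 0 \<and> c i2 = 0")
    case True
    then have "f (w i1) = 1" unfolding f_def \<alpha>_def \<beta>_def using wdist by simp
    then show ?thesis by (intro exI[of _ "w i1"]) simp
  next
    case False
    then have "f (w i1) = c i2" "f (w i2) = - c i1" unfolding f_def \<alpha>_def \<beta>_def using wdist by auto
    then show ?thesis using False by (metis neg_equal_0_iff_equal)
  qed
  have fB: "lin_mult (Suc N) c f b = 0" if b: "b \<in> mono_basis (Suc N) e (Suc i)" for b
  proof (cases "0 < b N")
    case True
    have "(\<Sum>j<N. if 0 < b j then c j * f (b(j := b j - 1)) else 0) = 0"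
    proof (rule sum.neutral, intro ballI)
      fix j assume j: "j \<in> {..<N}"
      have "(b(j := b j - 1)) N = b N" using j by simp
      then have "b(j := b j - 1) \<noteq> w i1" "b(j := b j - 1) \<noteq> w i2"
        using True wN i12 by (metis less_not_refl2)+
      then have "f (b(j := b j - 1)) = 0" unfolding f_def by simp
      then show "(if 0 < b j then c j * f (b(j := b j - 1)) else 0) = 0" by simp
    qed
    then show ?thesis unfolding lm_split using cN by simp
  next
    case False
    then have bt: "b = topv N e" using uq b by simp
    have "(\<Sum>j<N. if 0 < topv N e j then c j * f ((topv N e)(j := topv N e j - 1)) else 0) =
          (\<Sum>j<N. (if j = i1 then c i1 * \<alpha> else 0) + (if j = i2 then c i2 * \<beta> else 0))"
    proof (rule sum.cong)
      fix j assume j: "j \<in> {..<N}"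
      show "(if 0 < topv N e j then c j * f ((topv N e)(j := topv N e j - 1)) else 0) =
          (if j = i1 then c i1 * \<alpha> else 0) + (if j = i2 then c i2 * \<beta> else 0)"
      proof (cases "0 < topv N e j")
        case True
        have "(topv N e)(j := topv N e j - 1) = w j" unfolding w_def ..
        moreover have "w j = w i1 \<longleftrightarrow> j = i1"
        proof (cases "j = i1")
          case False
          then show ?thesis using topv_dist[of j N i1 e] j True i12 by (simp add: w_def)
        qed simp
        moreover have "w j = w i2 \<longleftrightarrow> j = i2"
        proof (cases "j = i2")
          case False
          then show ?thesis using topv_dist[of j N i2 e] j True i12 by (simp add: w_def)
        qed simp
        ultimately show ?thesis using True unfolding f_def by (simp add: algebra_simps)
      next
        case False
        then have "j \<noteq> i1" "j \<noteq> i2" using i12 by auto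
        then show ?thesis using False by simp
      qed
    qed simp
    also have "\<dots> = c i1 * \<alpha> + c i2 * \<beta>" using i12 by (simp add: sum.distrib)
    also have "\<dots> = 0" unfolding \<alpha>_def \<beta>_def by (auto simp: algebra_simps)
    finally show ?thesis unfolding lm_split bt by (simp add: topv_def)
  qed
  have ni: "\<not> mult_injective (Suc N) e c i"
  proof
    assume "mult_injective (Suc N) e c i"
    then have inj: "\<forall>f\<in>graded_piece (Suc N) e i. (\<forall>b\<in>mono_basis (Suc N) e (Suc i). lin_mult (Suc N) c f b = 0) \<longrightarrow> (\<forall>a. f a = 0)"
      unfolding mult_injective_def .
    have "\<forall>a. f a = 0" using bspec[OF inj fG] fB by blast
    then show False using fnz by simp
  qed
  show ?thesis using ni ns by blast
qed

lemma wlp0: "has_WLP TYPE('k::field) 0 e"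
  unfolding has_WLP_def
proof (intro exI allI disjI2)
  fix i
  have "mono_basis 0 e (Suc i) = {}" unfolding mono_basis_def by auto
  moreover have "(\<lambda>_. 0::'k) \<in> graded_piece 0 e i" unfolding graded_piece_def by simp
  ultimately show "mult_surjective 0 e (\<lambda>_. 1::'k) i" unfolding mult_surjective_def by blast
qed

lemma wlp_zero: "e N = 0 \<Longrightarrow> has_WLP TYPE('k::field) (Suc N) e"
  unfolding has_WLP_def using inj_zero by blast

lemma neg_all:
  assumes epos: "\<forall>j<N. 0 < e j" and eN: "e N = tot N (topv N e)"
    and z: "of_nat (mn N (topv N e)) = (0::'k::field)"
  shows "\<not> has_WLP TYPE('k) (Suc N) e"
proof
  assume "has_WLP TYPE('k) (Suc N) e"
  then obtain c :: "nat \<Rightarrow> 'k" where c: "\<forall>i. mult_injective (Suc N) e c i \<or> mult_surjective (Suc N) e c i"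
    unfolding has_WLP_def by blast
  have e1: "0 < e N"
  proof (rule ccontr)
    assume "\<not> 0 < e N"
    then have "tot N (topv N e) = 0" using eN by simp
    then have "mn N (topv N e) = 1" by (rule mn_zero)
    then show False using z by simp
  qed
  define i where "i = e N - 1"
  have ie: "Suc i = e N" unfolding i_def using e1 by simp
  have "\<not> mult_injective (Suc N) e c i \<and> \<not> mult_surjective (Suc N) e c i"
  proof (cases "c N = 0")
    case False
    then show ?thesis using neg_cN[OF epos eN z e1 ie] by blast
  next
    case True
    have "of_nat (mn N (topv N e)) \<noteq> (1::'k)" using z by simp
    then obtain i1 i2 where ii: "i1 < N" "i2 < N" "i1 \<noteq> i2" "0 < topv N e i1" "0 < topv N e i2"
      using two_idx by blast
    show ?thesis by (rule neg_c0[where c=c and N=N and e=e and i=i, OF epos eN ii e1 ie True])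
  qed
  then show False using c by blast
qed

theorem proposition4p10:
  fixes n p :: nat and d :: "nat \<Rightarrow> nat"
  assumes char: "CHAR('k::field) = p" and ppos: "p > 0"
    and dpos: "\<forall>i < n - 1. d i > 0"
    and dn: "d (n - 1) = (\<Sum>i < n - 1. d i - 1)"
  shows "(\<not> p dvd (fact (d (n - 1)) div (\<Prod>i < n - 1. fact (d i - 1)) :: nat) \<longrightarrow>
            has_WLP TYPE('k) n d \<and> has_WLP TYPE('k) n (d(n - 1 := d (n - 1) - 1)))
       \<and> (p dvd (fact (d (n - 1)) div (\<Prod>i < n - 1. fact (d i - 1)) :: nat) \<longrightarrow>
            \<not> has_WLP TYPE('k) n d)"
proof (cases n)
  case 0
  have p1: "p \<noteq> 1" using char CHAR_not_1[where 'a='k] by auto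
  have "(fact (d (n - 1)) div (\<Prod>i < n - 1. fact (d i - 1)) :: nat) = 1" using dn 0 by simp
  then show ?thesis using 0 wlp0[where 'k='k] p1 by simp
next
  case (Suc N)
  have nN: "n - 1 = N" using Suc by simp
  have tt: "tot N (topv N d) = (\<Sum>i<N. d i - 1)" unfolding tot_def topv_def by (rule sum.cong) auto
  have M: "(fact (d (n - 1)) div (\<Prod>i < n - 1. fact (d i - 1)) :: nat) = mn N (topv N d)"
  proof -
    have "(\<Prod>j<N. fact (topv N d j)) = (\<Prod>i<N. fact (d i - 1) :: nat)"
      unfolding topv_def by (rule prod.cong) auto
    then show ?thesis unfolding mn_fact nN using dn nN tt by simp
  qed
  have ch: "of_nat (mn N (topv N d)) = (0::'k) \<longleftrightarrow> p dvd mn N (topv N d)"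
    using of_nat_eq_0_iff_char_dvd[where 'a='k] char by simp
  have epos: "\<forall>j<N. 0 < d j" using dpos nN by simp
  have eN: "d N = tot N (topv N d)" using dn nN tt by simp
  define e' where "e' = d(N := d N - 1)"
  have te: "topv N e' = topv N d" unfolding topv_def e'_def by auto
  show ?thesis
  proof (intro conjI impI)
    assume "\<not> p dvd (fact (d (n - 1)) div (\<Prod>i < n - 1. fact (d i - 1)) :: nat)"
    then have nd: "\<not> p dvd mn N (topv N d)" using M by simp
    then have nz: "of_nat (mn N (topv N d)) \<noteq> (0::'k)" using ch by simp
    show "has_WLP TYPE('k) n d" using posA[OF epos eN nz] Suc by simp
    have "has_WLP TYPE('k) (Suc N) e'"
    proof (cases "d N = 0")
      case True
      then show ?thesis by (intro wlp_zero) (simp add: e'_def)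
    next
      case False
      show ?thesis
      proof (rule posB)
        show "\<forall>j<N. 0 < e' j" using epos unfolding e'_def by simp
        show "Suc (e' N) = tot N (topv N e')" unfolding te using eN False unfolding e'_def by simp
        show "of_nat (mn N (topv N e')) \<noteq> (0::'k)" unfolding te by (rule nz)
      qed
    qed
    then show "has_WLP TYPE('k) n (d(n - 1 := d (n - 1) - 1))" using Suc unfolding e'_def by simp
  next
    assume "p dvd (fact (d (n - 1)) div (\<Prod>i < n - 1. fact (d i - 1)) :: nat)"
    then have "p dvd mn N (topv N d)" using M by simp
    then have z: "of_nat (mn N (topv N d)) = (0::'k)" using ch by simp
    show "\<not> has_WLP TYPE('k) n d" using neg_all[OF epos eN z] Suc by simp
  qed
qed

end
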